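(* For every $k\in\mathbb{Z}$, $$\partial_v\,\pi_k(z)=z\,\pi_k(z),\qquad \partial_q\,\pi_k(z)=z\,\pi_{k+1}(z),$$ where $\partial_v,\partial_q$ are the partial derivatives on $\mathbb{Q}[\tau,q,v]$ applied coefficientwise in $z$.
   Context: Let $\mathbb{L}_0\in\mathbb{Q}[\tau,q,v]((\Lambda^{-1}))$ be the Laurent series $$\mathbb{L}_0=K_0+\tau\sum_{n=0}^\infty\Bigl(\frac{\tau}{\Lambda}\Bigr)^n\sum_{k=0}^n(-1)^{n-k}{n\brack k}\frac{\log(K_0/\Lambda)^{n-k+1}}{(n-k+1)!}\Bigl(\frac{K_0}{\Lambda}\Bigr)^{-n},$$ where $K_0=\Lambda+v+q\Lambda^{-1}$, $\log(K_0/\Lambda)$ and $(K_0/\Lambda)^{-n}$ are expanded in powers of $\Lambda^{-1}$, and ${n\brack k}$ are the unsigned Stirling numbers of the first kind ($\sum_k{n\brack k}\tau^k=\prod_{j=0}^{n-1}(\tau+j)$). For $n\in\mathbb{Z}$ let $[n]!=\Gamma(\tau z+n+1)/\Gamma(\tau z+1)$, i.e. $[n]!=\prod_{j=1}^n(j+\tau z)$ for $n\ge0$ (with $1/[n]!$ expanded as a power series in $z$) and $1/[-m]!=\prod_{j=0}^{m-1}(\tau z-j)$ for $m>0$. Define $\pi_k(z)\in\mathbb{Q}[\tau,q,v]((z))$ by $$\sum_{n\in\mathbb{Z}}\frac{z^n}{[n]!}\mathbb{L}_0^n=\sum_{k\in\mathbb{Z}}\pi_k(z)\Lambda^k,$$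 where $\mathbb{L}_0^n$ for $n<0$ is the inverse power in the commutative ring $\mathbb{Q}[\tau,q,v]((\Lambda^{-1}))$. *)

theory Defs
  imports "HOL-Computational_Algebra.Computational_Algebra" "HOL-Combinatorics.Stirling"
begin

unbundle fps_syntax

text \<open>The coefficient ring Q[tau,q,v], realised as nested univariate polynomials:
  outermost variable v, middle variable q, innermost variable tau.\<close>
type_synonym R = "rat poly poly poly"

definition cR :: "rat \<Rightarrow> R" where "cR c = [:[:[:c:]:]:]"
definition varV :: R where "varV = [:0, 1:]"
definition varQ :: R where "varQ = [:[:0, 1:]:]"
definition varT :: R where "varT = [:[:[:0, 1:]:]:]"

definition dV :: "R \<Rightarrow> R" where "dV = pderiv"
definition dQ :: "R \<Rightarrow> R" where "dQ = map_poly pderiv"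

text \<open>Coefficientwise application of a map g (with g 0 = 0) to a Laurent series.\<close>
definition fls_cmap :: "(R \<Rightarrow> R) \<Rightarrow> R fls \<Rightarrow> R fls" where
  "fls_cmap g f = Abs_fls (\<lambda>m. g (f $$ m))"

text \<open>Power series in X = Lambda^-1.  PK = K0/Lambda = 1 + v X + q X^2.\<close>
definition PK :: "R fps" where
  "PK = 1 + fps_const varV * fps_X + fps_const varQ * fps_X ^ 2"

definition logPK :: "R fps" where
  "logPK = Abs_fps (\<lambda>m. cR (fps_ln (1::rat) $ m)) oo (PK - 1)"

definition PKinv :: "R fps" where
  "PKinv = fps_left_inverse PK 1"

text \<open>n-th summand (without the overall factor tau) of the series in the definition of L0.\<close>
definition Lterm :: "nat \<Rightarrow> R fps" where
  "Lterm n = fps_const (varT ^ n) * fps_X ^ n *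
     (\<Sum>k\<le>n. fps_const (of_int ((-1) ^ (n - k) * int (stirling n k)) * cR (1 / fact (n - k + 1)))
              * logPK ^ (n - k + 1)) * PKinv ^ n"

text \<open>The X-adically convergent sum over n: the n-th summand has order at least n,
  so the coefficient of X^m only receives contributions from n \<le> m.\<close>
definition Ltail :: "R fps" where
  "Ltail = Abs_fps (\<lambda>m. \<Sum>n\<le>m. Lterm n $ m)"

text \<open>L0 as a Laurent series in X = Lambda^-1 (fls_X_inv = Lambda).\<close>
definition L0 :: "R fls" where
  "L0 = fls_X_inv + fls_const varV + fls_const varQ * fls_X + fls_const varT * fps_to_fls Ltail"

text \<open>Integer powers of L0 (inverse taken in the ring of Laurent series; L0 has leading coefficient 1).\<close>
definition Lpow :: "int \<Rightarrow> R fls" where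
  "Lpow n = (if 0 \<le> n then L0 ^ nat n else fls_left_inverse L0 1 ^ nat (- n))"

definition recipfact :: "int \<Rightarrow> R fps" where
  "recipfact n = (if 0 \<le> n
     then fps_left_inverse (\<Prod>j\<in>{1..nat n}. fps_const (of_nat j) + fps_const varT * fps_X)
                           (cR (1 / fact (nat n)))
     else (\<Prod>j\<in>{0..<nat (- n)}. fps_const varT * fps_X - fps_const (of_nat j)))"

definition zterm :: "int \<Rightarrow> R fls" where
  "zterm n = fls_shift (- n) (fps_to_fls (recipfact n))"

text \<open>pi_k(z): coefficient of Lambda^k in sum_n z^n/[n]! L0^n.  The coefficient of Lambda^k
  of L0^n vanishes unless n \<ge> k, and z^n/[n]! has order \<ge> n, so the coefficient of z^m only
  receives contributions from k \<le> n \<le> m.\<close>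
definition piK :: "int \<Rightarrow> R fls" where
  "piK k = Abs_fls (\<lambda>m. \<Sum>n\<in>{k..m}. zterm n $$ m * Lpow n $$ (- k))"

end

theory Submission
  imports Defs
begin


locale der =
  fixes d :: "'a::comm_ring_1 \<Rightarrow> 'a"
  assumes d_add: "d (x + y) = d x + d y"
      and d_mult: "d (x * y) = d x * y + x * d y"
begin

lemma d_0[simp]: "d 0 = 0"
  using d_add[of 0 0] by simp

lemma d_1[simp]: "d 1 = 0"
  using d_mult[of 1 1] by simp

lemma d_uminus: "d (- x) = - d x"
  using d_add[of x "-x"] by (simp add: eq_neg_iff_add_eq_0 add.commute)

lemma d_diff: "d (x - y) = d x - d y"
  using d_add[of x "-y"] by (simp add: d_uminus)

lemma d_sum: "d (sum f A) = (\<Sum>a\<in>A. d (f a))"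
  by (induction A rule: infinite_finite_induct) (auto simp: d_add)

lemma d_of_nat[simp]: "d (of_nat n) = 0"
  by (induction n) (auto simp: d_add)

lemma d_of_int[simp]: "d (of_int n) = 0"
proof -
  have "(of_int n :: 'a) = of_nat (nat n) - of_nat (nat (- n))"
    by (cases "0 \<le> n") (simp_all add: of_nat_nat)
  then show ?thesis by (simp add: d_diff)
qed

lemma d_power: "d (x ^ n) = of_nat n * x ^ (n - 1) * d x"
proof (induction n)
  case (Suc n)
  then show ?case
    by (cases n) (auto simp: d_mult algebra_simps)
qed simp

lemma d_cmult: "d c = 0 \<Longrightarrow> d (c * x) = c * d x"
  by (simp add: d_mult)

definition fcm :: "'a fps \<Rightarrow> 'a fps" where
  "fcm f = Abs_fps (\<lambda>n. d (f $ n))"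

lemma fcm_nth[simp]: "fcm f $ n = d (f $ n)"
  by (simp add: fcm_def)

lemma fcm_add: "fcm (f + g) = fcm f + fcm g"
  by (rule fps_ext) (simp add: d_add)

lemma fcm_uminus: "fcm (- f) = - fcm f"
  by (rule fps_ext) (simp add: d_uminus)

lemma fcm_diff: "fcm (f - g) = fcm f - fcm g"
  by (rule fps_ext) (simp add: d_diff)

lemma fcm_sum: "fcm (sum f A) = (\<Sum>a\<in>A. fcm (f a))"
  by (induction A rule: infinite_finite_induct) (auto simp: fcm_add fps_eq_iff)

lemma fcm_mult: "fcm (f * g) = fcm f * g + f * fcm g"
  by (rule fps_ext) (simp add: fps_mult_nth d_sum d_mult sum.distrib)

lemma fcm_const[simp]: "fcm (fps_const c) = fps_const (d c)"
  by (rule fps_ext) simp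

lemma fcm_0[simp]: "fcm 0 = 0"
  by (rule fps_ext) simp

lemma fcm_1[simp]: "fcm 1 = 0"
  by (rule fps_ext) simp

lemma fcm_X[simp]: "fcm fps_X = 0"
  by (rule fps_ext) (simp add: fps_X_def)

lemma fcm_X_power[simp]: "fcm (fps_X ^ n) = 0"
  by (rule fps_ext) (simp add: fps_X_power_iff)

lemma fcm_power: "fcm (f ^ n) = of_nat n * f ^ (n - 1) * fcm f"
proof (induction n)
  case (Suc n)
  then show ?case
    by (cases n) (auto simp: fcm_mult algebra_simps)
qed simp

lemma fcm_cmult: "(\<And>n. d (c $ n) = 0) \<Longrightarrow> fcm (c * f) = c * fcm f"
proof -
  assume "\<And>n. d (c $ n) = 0"
  then have "fcm c = 0" by (intro fps_ext) simp
  then show ?thesis by (simp add: fcm_mult)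
qed

lemma fcm_inverse:
  assumes "g * f = 1"
  shows "fcm g = - (g * g * fcm f)"
proof -
  have "fcm g * f + g * fcm f = 0" using fcm_mult[of g f] assms by simp
  then have "(fcm g * f + g * fcm f) * g = 0" by simp
  then have "fcm g * (g * f) + g * g * fcm f = 0" by (simp add: algebra_simps)
  then show ?thesis using assms by (simp add: eq_neg_iff_add_eq_0)
qed

definition lbf :: "'a fps \<Rightarrow> nat \<Rightarrow> bool" where
  "lbf f a \<longleftrightarrow> (\<forall>i<a. f $ i = 0)"

lemma fcm_lbf: "lbf f a \<Longrightarrow> lbf (fcm f) a"
  by (simp add: lbf_def)

definition fls_cm :: "'a fls \<Rightarrow> 'a fls" where
  "fls_cm f = Abs_fls (\<lambda>m. d (f $$ m))"

lemma fls_cm_nth[simp]: "fls_cm f $$ n = d (f $$ n)"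
  unfolding fls_cm_def
  by (rule nth_Abs_fls_lower_bound[where N = "fls_subdegree f"]) simp

definition lb :: "'a fls \<Rightarrow> int \<Rightarrow> bool" where
  "lb f a \<longleftrightarrow> (\<forall>i<a. f $$ i = 0)"

end

definition lbl :: "'a::zero fls \<Rightarrow> int \<Rightarrow> bool" where
  "lbl f a \<longleftrightarrow> (\<forall>i<a. f $$ i = 0)"

lemma lbl_subdegree: "lbl f (fls_subdegree f)"
  by (simp add: lbl_def)

lemma lbl_mono: "lbl f a \<Longrightarrow> b \<le> a \<Longrightarrow> lbl f b"
  by (simp add: lbl_def)

lemma fls_times_nth_lb:
  fixes f g :: "'a::comm_ring_1 fls"
  assumes "lbl f a" "lbl g b"
  shows "(f * g) $$ n = (\<Sum>i=a..n - b. f $$ i * g $$ (n - i))"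
proof (cases "f = 0 \<or> g = 0")
  case True
  then show ?thesis by auto
next
  case False
  then have f0: "f \<noteq> 0" and g0: "g \<noteq> 0" by auto
  have ha: "a \<le> fls_subdegree f"
    using assms(1) f0 by (intro fls_subdegree_geI) (auto simp: lbl_def)
  have hb: "b \<le> fls_subdegree g"
    using assms(2) g0 by (intro fls_subdegree_geI) (auto simp: lbl_def)
  have "(f * g) $$ n = (\<Sum>i=fls_subdegree f..n - fls_subdegree g. f $$ i * g $$ (n - i))"
    by (rule fls_times_nth(2))
  also have "\<dots> = (\<Sum>i=a..n - b. f $$ i * g $$ (n - i))"
  proof (rule sum.mono_neutral_left)
    show "{fls_subdegree f..n - fls_subdegree g} \<subseteq> {a..n - b}" using ha hb by auto
    show "\<forall>i\<in>{a..n - b} - {fls_subdegree f..n - fls_subdegree g}. f $$ i * g $$ (n - i) = 0"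
    proof
      fix i assume "i \<in> {a..n - b} - {fls_subdegree f..n - fls_subdegree g}"
      then have "i < fls_subdegree f \<or> n - i < fls_subdegree g" by auto
      then show "f $$ i * g $$ (n - i) = 0" by auto
    qed
  qed simp
  finally show ?thesis .
qed

lemma lbl_mult:
  fixes f g :: "'a::comm_ring_1 fls"
  assumes "lbl f a" "lbl g b"
  shows "lbl (f * g) (a + b)"
  unfolding lbl_def
proof (intro allI impI)
  fix i assume "i < a + b"
  then show "(f * g) $$ i = 0"
    by (simp add: fls_times_nth_lb[OF assms])
qed

lemma lbl_power:
  fixes f :: "'a::comm_ring_1 fls"
  assumes "lbl f a"
  shows "lbl (f ^ n) (int n * a)"
proof (induction n)
  case 0
  then show ?case by (simp add: lbl_def)
next
  case (Suc n)
  have "lbl (f * f ^ n) (a + int n * a)" by (rule lbl_mult[OF assms Suc])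
  then show ?case by (simp add: algebra_simps)
qed

context der
begin

lemma fls_cm_lbl: "lbl f a \<Longrightarrow> lbl (fls_cm f) a"
  by (simp add: lbl_def)

lemma fls_cm_add: "fls_cm (f + g) = fls_cm f + fls_cm g"
  by (rule fls_eqI) (simp add: d_add)

lemma fls_cm_diff: "fls_cm (f - g) = fls_cm f - fls_cm g"
  by (rule fls_eqI) (simp add: d_diff)

lemma fls_cm_mult: "fls_cm (f * g) = fls_cm f * g + f * fls_cm g"
proof (rule fls_eqI)
  fix n
  let ?a = "fls_subdegree f" and ?b = "fls_subdegree g"
  have lf: "lbl f ?a" and lg: "lbl g ?b" by (rule lbl_subdegree)+
  have ldf: "lbl (fls_cm f) ?a" and ldg: "lbl (fls_cm g) ?b"
    using lf lg by (simp_all add: fls_cm_lbl)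
  show "fls_cm (f * g) $$ n = (fls_cm f * g + f * fls_cm g) $$ n"
    by (simp add: fls_times_nth_lb[OF lf lg] fls_times_nth_lb[OF ldf lg]
        fls_times_nth_lb[OF lf ldg] d_sum d_mult sum.distrib)
qed

lemma fls_cm_const[simp]: "fls_cm (fls_const c) = fls_const (d c)"
  by (rule fls_eqI) simp

lemma fls_cm_power: "fls_cm (f ^ n) = of_nat n * f ^ (n - 1) * fls_cm f"
proof (induction n)
  case 0
  then show ?case by (simp add: fls_eq_iff)
next
  case (Suc n)
  then show ?case
    by (cases n) (auto simp: fls_cm_mult algebra_simps)
qed

lemma fls_cm_inverse:
  assumes "g * f = 1"
  shows "fls_cm g = - (g * g * fls_cm f)"
proof -
  have z: "fls_cm 1 = 0" by (rule fls_eqI) simp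
  have "fls_cm g * f + g * fls_cm f = 0" using fls_cm_mult[of g f] assms z by simp
  then have "(fls_cm g * f + g * fls_cm f) * g = 0" by simp
  then have "fls_cm g * (g * f) + g * g * fls_cm f = 0" by (simp add: algebra_simps)
  then show ?thesis using assms by (simp add: eq_neg_iff_add_eq_0)
qed

end



definition lbq :: "'a::comm_ring_1 fps \<Rightarrow> nat \<Rightarrow> bool" where
  "lbq f a \<longleftrightarrow> (\<forall>i<a. f $ i = 0)"

lemma lbq_mult:
  assumes "lbq f a" "lbq g b"
  shows "lbq (f * g) (a + b)"
  unfolding lbq_def
proof (intro allI impI)
  fix i assume i: "i < a + b"
  have "\<forall>k\<in>{0..i}. f $ k * g $ (i - k) = 0"
  proof
    fix k assume "k \<in> {0..i}"
    then have "k < a \<or> i - k < b" using i by auto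
    then show "f $ k * g $ (i - k) = 0" using assms by (auto simp: lbq_def)
  qed
  then show "(f * g) $ i = 0" by (simp add: fps_mult_nth)
qed

lemma lbq_mono: "lbq f a \<Longrightarrow> b \<le> a \<Longrightarrow> lbq f b"
  by (simp add: lbq_def)

lemma lbq_power:
  assumes "lbq f a"
  shows "lbq (f ^ n) (n * a)"
proof (induction n)
  case 0
  then show ?case by (simp add: lbq_def)
next
  case (Suc n)
  show ?case using lbq_mult[OF assms Suc] by simp
qed

lemma lbq_0: "lbq f 0" by (simp add: lbq_def)

lemma lbq_1: "f $ 0 = 0 \<Longrightarrow> lbq f 1" by (simp add: lbq_def)

lemma lbq_multR: "lbq f a \<Longrightarrow> lbq (f * g) a"
  using lbq_mult[of f a g 0] by (simp add: lbq_0)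

lemma lbq_multL: "lbq g a \<Longrightarrow> lbq (f * g) a"
  using lbq_mult[of f 0 g a] by (simp add: lbq_0)

lemma lbq_zero_nth: "lbq f a \<Longrightarrow> i < a \<Longrightarrow> f $ i = 0"
  by (simp add: lbq_def)

definition ssum :: "(nat \<Rightarrow> 'a::comm_ring_1 fps) \<Rightarrow> 'a fps" where
  "ssum G = Abs_fps (\<lambda>m. (\<Sum>n\<le>m. G n) $ m)"

definition good :: "(nat \<Rightarrow> 'a::comm_ring_1 fps) \<Rightarrow> bool" where
  "good G \<longleftrightarrow> (\<forall>n. lbq (G n) n)"

lemma ssum_nth: "ssum G $ m = (\<Sum>n\<le>m. G n) $ m"
  by (simp add: ssum_def)

lemma ssum_trunc:
  assumes "good G" "i \<le> m"
  shows "ssum G $ i = (\<Sum>n\<le>m. G n) $ i"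
proof -
  have "{..m} = {..i} \<union> {i<..m}" using assms(2) by auto
  then have "(\<Sum>n\<le>m. G n) = (\<Sum>n\<le>i. G n) + (\<Sum>n\<in>{i<..m}. G n)"
  proof -
    have "sum G ({..i} \<union> {i<..m}) = sum G {..i} + sum G {i<..m}"
      by (rule sum.union_disjoint) auto
    then show ?thesis using \<open>{..m} = {..i} \<union> {i<..m}\<close> by simp
  qed
  moreover have "(\<Sum>n\<in>{i<..m}. G n) $ i = 0"
    using assms(1) by (auto simp: fps_sum_nth good_def lbq_def intro!: sum.neutral)
  ultimately show ?thesis by (simp add: ssum_nth)
qed

lemma mult_eqm:
  assumes "\<And>i. i \<le> m \<Longrightarrow> A $ i = B $ i"
  shows "(F * A) $ m = (F * B) $ m"
  using assms by (auto simp: fps_mult_nth intro!: sum.cong)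

lemma ssum_add: "ssum (\<lambda>n. G n + H n) = ssum G + ssum H"
  by (rule fps_ext) (simp add: ssum_nth sum.distrib)

lemma ssum_diff: "ssum (\<lambda>n. G n - H n) = ssum G - ssum H"
  by (rule fps_ext) (simp add: ssum_nth sum_subtractf)

lemma ssum_zero: "ssum (\<lambda>n. 0) = 0"
  by (rule fps_ext) (simp add: ssum_nth)

lemma ssum_single0: "ssum (\<lambda>n. if n = 0 then c else 0) = c"
proof (rule fps_ext)
  fix m :: nat
  have "(\<Sum>n\<le>m. if n = 0 then c else 0) = c"
    by (subst sum.delta) auto
  then show "ssum (\<lambda>n. if n = 0 then c else 0) $ m = c $ m" by (simp add: ssum_nth)
qed

lemma ssum_cmult:
  assumes "good G"
  shows "F * ssum G = ssum (\<lambda>n. F * G n)"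
proof (rule fps_ext)
  fix m
  have "(F * ssum G) $ m = (F * (\<Sum>n\<le>m. G n)) $ m"
    by (rule mult_eqm) (rule ssum_trunc[OF assms])
  also have "\<dots> = ssum (\<lambda>n. F * G n) $ m"
    by (simp add: ssum_nth sum_distrib_left)
  finally show "(F * ssum G) $ m = ssum (\<lambda>n. F * G n) $ m" .
qed

lemma ssum_mult:
  assumes "good G" "good H"
  shows "ssum G * ssum H = ssum (\<lambda>n. \<Sum>i\<le>n. G i * H (n - i))"
proof (rule fps_ext)
  fix m
  have "(ssum G * ssum H) $ m = ((\<Sum>n\<le>m. G n) * ssum H) $ m"
    using mult_eqm[of m "ssum G" "\<Sum>n\<le>m. G n" "ssum H"] ssum_trunc[OF assms(1)]
    by (simp add: mult.commute)
  also have "\<dots> = ((\<Sum>n\<le>m. G n) * (\<Sum>n\<le>m. H n)) $ m"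
    by (rule mult_eqm) (rule ssum_trunc[OF assms(2)])
  also have "\<dots> = (\<Sum>i\<le>m. \<Sum>j\<le>m. (G i * H j) $ m)"
    by (simp add: sum_distrib_left sum_distrib_right fps_sum_nth) (rule sum.swap)
  also have "\<dots> = (\<Sum>(i,j)\<in>{..m} \<times> {..m}. (G i * H j) $ m)"
    by (rule sum.cartesian_product)
  also have "\<dots> = (\<Sum>(i,j)\<in>{(i,j). i + j \<le> m}. (G i * H j) $ m)"
  proof (rule sum.mono_neutral_right)
    show "finite ({..m} \<times> {..m})" by simp
    show "{(i, j). i + j \<le> m} \<subseteq> {..m} \<times> {..m}" by auto
    show "\<forall>x\<in>{..m} \<times> {..m} - {(i, j). i + j \<le> m}. (case x of (i, j) \<Rightarrow> (G i * H j) $ m) = 0"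
    proof
      fix x assume x: "x \<in> {..m} \<times> {..m} - {(i, j). i + j \<le> m}"
      obtain i j where ij: "x = (i, j)" by (cases x)
      have "lbq (G i * H j) (i + j)"
        using assms by (intro lbq_mult) (auto simp: good_def)
      then show "(case x of (i, j) \<Rightarrow> (G i * H j) $ m) = 0"
        using x ij by (auto simp: lbq_def)
    qed
  qed
  also have "\<dots> = (\<Sum>k\<le>m. \<Sum>i\<le>k. (G i * H (k - i)) $ m)"
    by (rule sum.triangle_reindex_eq)
  also have "\<dots> = ssum (\<lambda>n. \<Sum>i\<le>n. G i * H (n - i)) $ m"
    by (simp add: ssum_nth fps_sum_nth)
  finally show "(ssum G * ssum H) $ m = ssum (\<lambda>n. \<Sum>i\<le>n. G i * H (n - i)) $ m" .
qed

lemma ssum_shift: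
  assumes "G 0 = 0" "good G"
  shows "ssum G = ssum (\<lambda>n. G (Suc n))"
proof (rule fps_ext)
  fix m
  have "ssum G $ m = (\<Sum>n\<le>Suc m. G n) $ m"
    by (rule ssum_trunc[OF assms(2)]) simp
  also have "\<dots> = (\<Sum>n\<le>m. G (Suc n)) $ m"
    by (subst sum.atMost_Suc_shift) (simp add: assms(1))
  finally show "ssum G $ m = ssum (\<lambda>n. G (Suc n)) $ m" by (simp add: ssum_nth)
qed

lemma compose_ssum: "a oo b = ssum (\<lambda>n. fps_const (a $ n) * b ^ n)"
  by (rule fps_ext) (simp add: ssum_nth fps_compose_nth fps_sum_nth atLeast0AtMost)

definition PS :: "'a::comm_ring_1 fps \<Rightarrow> (nat \<Rightarrow> 'a fps) \<Rightarrow> 'a fps" where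
  "PS T C = ssum (\<lambda>n. T ^ n * C n)"

lemma good_PS: "T $ 0 = 0 \<Longrightarrow> good (\<lambda>n. T ^ n * C n)"
  unfolding good_def using lbq_power[OF lbq_1, of T] by (auto intro: lbq_multR)

lemma PS_add: "PS T (\<lambda>n. C n + D n) = PS T C + PS T D"
  by (simp add: PS_def distrib_left ssum_add)

lemma PS_diff: "PS T (\<lambda>n. C n - D n) = PS T C - PS T D"
  by (simp add: PS_def right_diff_distrib ssum_diff)

lemma PS_cmult:
  assumes "T $ 0 = 0"
  shows "F * PS T C = PS T (\<lambda>n. F * C n)"
proof -
  have "F * PS T C = ssum (\<lambda>n. F * (T ^ n * C n))"
    unfolding PS_def by (rule ssum_cmult[OF good_PS[OF assms]])
  then show ?thesis by (simp add: PS_def algebra_simps)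
qed

lemma PS_mult:
  assumes "T $ 0 = 0"
  shows "PS T C * PS T D = PS T (\<lambda>n. \<Sum>i\<le>n. C i * D (n - i))"
proof -
  have "PS T C * PS T D = ssum (\<lambda>n. \<Sum>i\<le>n. (T ^ i * C i) * (T ^ (n - i) * D (n - i)))"
    unfolding PS_def by (rule ssum_mult[OF good_PS[OF assms] good_PS[OF assms]])
  also have "\<dots> = ssum (\<lambda>n. T ^ n * (\<Sum>i\<le>n. C i * D (n - i)))"
  proof -
    have "(\<Sum>i\<le>n. (T ^ i * C i) * (T ^ (n - i) * D (n - i))) = T ^ n * (\<Sum>i\<le>n. C i * D (n - i))" for n
    proof -
      have "(\<Sum>i\<le>n. (T ^ i * C i) * (T ^ (n - i) * D (n - i))) = (\<Sum>i\<le>n. T ^ n * (C i * D (n - i)))"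
      proof (rule sum.cong)
        fix i assume "i \<in> {..n}"
        then have "T ^ i * T ^ (n - i) = T ^ n" by (simp flip: power_add)
        then show "(T ^ i * C i) * (T ^ (n - i) * D (n - i)) = T ^ n * (C i * D (n - i))"
          by (metis (no_types, lifting) mult.assoc mult.left_commute)
      qed simp
      then show ?thesis by (simp add: sum_distrib_left)
    qed
    then show ?thesis by simp
  qed
  finally show ?thesis by (simp add: PS_def)
qed

lemma PS_single0: "PS T (\<lambda>n. if n = 0 then c else 0) = c"
proof -
  have "(\<lambda>n. T ^ n * (if n = 0 then c else 0)) = (\<lambda>n. if n = 0 then c else 0)"
    by auto
  then show ?thesis by (simp add: PS_def ssum_single0)
qed

lemma PS_single1:
  assumes "T $ 0 = 0"
  shows "PS T (\<lambda>n. if n = 1 then 1 else 0) = T"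
proof (rule fps_ext)
  fix m
  have "(\<Sum>n\<le>m. T ^ n * (if n = 1 then 1 else 0)) $ m = T $ m"
  proof (cases m)
    case 0
    then show ?thesis using \<open>T $ 0 = 0\<close> by simp
  next
    case (Suc k)
    then have "(\<Sum>n\<le>m. T ^ n * (if n = 1 then 1 else 0)) = T"
      by (simp add: sum.delta' if_distrib cong: if_cong)
    then show ?thesis by simp
  qed
  then show "PS T (\<lambda>n. if n = 1 then 1 else 0) $ m = T $ m" by (simp add: PS_def ssum_nth)
qed

context der
begin

lemma fcm_ssum: "fcm (ssum G) = ssum (\<lambda>n. fcm (G n))"
  by (rule fps_ext) (simp add: ssum_nth fcm_sum fps_sum_nth d_sum)

lemma fcm_PS:
  assumes T0: "T $ 0 = 0"
  shows "fcm (PS T C) = fcm T * PS T (\<lambda>n. of_nat (Suc n) * C (Suc n)) + PS T (\<lambda>n. fcm (C n))"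
proof -
  define G where "G n = of_nat n * T ^ (n - 1) * fcm T * C n" for n
  have "fcm (PS T C) = ssum (\<lambda>n. G n + T ^ n * fcm (C n))"
    unfolding PS_def fcm_ssum G_def by (simp add: fcm_mult fcm_power algebra_simps)
  also have "\<dots> = ssum G + PS T (\<lambda>n. fcm (C n))"
    by (simp add: ssum_add PS_def)
  also have "ssum G = ssum (\<lambda>n. G (Suc n))"
  proof (rule ssum_shift)
    show "G 0 = 0" by (simp add: G_def)
    have dT: "lbq (fcm T) 1" using T0 by (simp add: lbq_def)
    show "good G" unfolding good_def
    proof
      fix n show "lbq (G n) n"
      proof (cases n)
        case 0 then show ?thesis by (simp add: lbq_0)
      next
        case (Suc k)
        have "lbq (T ^ k * fcm T) (k * 1 + 1)"
          by (rule lbq_mult[OF lbq_power[OF lbq_1[OF T0]] dT])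
        then have "lbq (of_nat n * (T ^ k * fcm T) * C n) n"
          using Suc by (auto intro: lbq_multR lbq_multL)
        then show ?thesis using Suc by (simp add: G_def mult.assoc)
      qed
    qed
  qed
  also have "ssum (\<lambda>n. G (Suc n)) = fcm T * PS T (\<lambda>n. of_nat (Suc n) * C (Suc n))"
    unfolding PS_def by (subst ssum_cmult[OF good_PS[OF T0]]) (simp add: G_def algebra_simps)
  finally show ?thesis .
qed

lemma fcm_compose:
  assumes "\<And>n. d (a $ n) = 0" "b $ 0 = 0"
  shows "fcm (a oo b) = fcm b * (fps_deriv a oo b)"
proof -
  have e: "a oo b = PS b (\<lambda>n. fps_const (a $ n))" for a
    by (simp add: compose_ssum PS_def mult.commute)
  have "fcm (a oo b) = fcm b * PS b (\<lambda>n. of_nat (Suc n) * fps_const (a $ Suc n)) + PS b (\<lambda>n. 0)"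
    unfolding e fcm_PS[OF assms(2)] using assms(1) by simp
  also have "PS b (\<lambda>n. 0) = 0" by (simp add: PS_def ssum_zero)
  also have "PS b (\<lambda>n. of_nat (Suc n) * fps_const (a $ Suc n)) = fps_deriv a oo b"
    unfolding e by (simp add: fps_of_nat[symmetric] del: of_nat_Suc)
  finally show ?thesis by simp
qed

end



lemma cR_0[simp]: "cR 0 = 0" by (simp add: cR_def)
lemma cR_1[simp]: "cR 1 = 1" by (simp add: cR_def one_pCons)
lemma cR_add: "cR (a + b) = cR a + cR b" by (simp add: cR_def)
lemma cR_uminus: "cR (- a) = - cR a" by (simp add: cR_def)
lemma cR_diff: "cR (a - b) = cR a - cR b" by (simp add: cR_def)
lemma cR_mult: "cR (a * b) = cR a * cR b" by (simp add: cR_def)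
lemma cR_of_nat: "cR (of_nat n) = of_nat n" by (simp add: cR_def of_nat_poly)
lemma cR_of_int: "cR (of_int n) = of_int n" by (simp add: cR_def of_int_poly)
lemma cR_eq0: "cR a = 0 \<longleftrightarrow> a = 0" by (simp add: cR_def)

lemma R_of_nat_neq0: "n \<noteq> 0 \<Longrightarrow> (of_nat n :: R) \<noteq> 0"
  by (simp add: of_nat_poly)

lemma R_of_nat_neq0': "(1 + of_nat n :: R) \<noteq> 0"
  using R_of_nat_neq0[of "Suc n"] by simp

lemma R_cancel_nat: "(of_nat (Suc n) :: R) * a = 0 \<Longrightarrow> a = 0"
  using R_of_nat_neq0[of "Suc n"] by simp

interpretation DS: der "fps_deriv :: 'a::comm_ring_1 fps \<Rightarrow> 'a fps"
  by unfold_locales (simp_all add: fps_deriv_mult algebra_simps)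

type_synonym B = "R fps fps"

definition Ycoef :: "nat \<Rightarrow> nat \<Rightarrow> rat" where
  "Ycoef N j = (if 1 \<le> j \<and> j \<le> N + 1 then (-1) ^ (j - 1) * of_nat (stirling N (N + 1 - j)) / fact j else 0)"

definition Y :: B where
  "Y = Abs_fps (\<lambda>N. Abs_fps (\<lambda>j. cR (Ycoef N j)))"

lemma Y_nth_nth: "Y $ N $ j = cR (Ycoef N j)"
  by (simp add: Y_def)

lemma Ycoef_rec:
  "of_nat (Suc j) * Ycoef (Suc M) (Suc j) = of_nat (Suc j) * Ycoef M (Suc j) - of_nat M * Ycoef M j"
proof -
  have fj: "(fact (Suc j) :: rat) = of_nat (Suc j) * fact j" by simp
  consider "j = 0" | "1 \<le> j \<and> j \<le> M" | "j = M + 1" | "j > M + 1" by linarith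
  then show ?thesis
  proof cases
    case 1
    then show ?thesis by (simp add: Ycoef_def)
  next
    case 2
    have st: "stirling (Suc M) (Suc M - j) = M * stirling M (Suc M - j) + stirling M (M - j)"
    proof -
      have "Suc M - j = Suc (M - j)" using 2 by (intro Suc_diff_le) simp
      then show ?thesis using stirling.simps(4)[of M "M - j"] by simp
    qed
    define A where "A = (-1::rat) ^ j * of_nat (stirling (Suc M) (Suc M - j))"
    define B where "B = (-1::rat) ^ j * of_nat (stirling M (M - j))"
    define C where "C = (-1::rat) ^ j * of_nat M * of_nat (stirling M (Suc M - j))"
    have ABC: "A = B + C" unfolding A_def B_def C_def st by (simp add: algebra_simps)
    have e1: "(-1::rat) ^ (j - 1) = - ((-1) ^ j)"
      using 2 by (cases j) auto
    have x1: "of_nat (Suc j) * Ycoef (Suc M) (Suc j) = A / fact j"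
      using 2 by (simp add: Ycoef_def fj A_def)
    have x2: "of_nat (Suc j) * Ycoef M (Suc j) = B / fact j"
      using 2 by (simp add: Ycoef_def fj B_def Suc_diff_le)
    have x3: "of_nat M * Ycoef M j = - (C / fact j)"
      using 2 e1 by (simp add: Ycoef_def C_def)
    show ?thesis unfolding x1 x2 x3 ABC by (simp add: add_divide_distrib)
  next
    case 3
    then show ?thesis by (cases M) (simp_all add: Ycoef_def)
  next
    case 4
    then show ?thesis by (simp add: Ycoef_def)
  qed
qed

lemma Ycoef_0: "Ycoef N 0 = 0" by (simp add: Ycoef_def)
lemma Ycoef_1: "Ycoef N 1 = 1" by (simp add: Ycoef_def)
lemma Ycoef_1': "Ycoef N (Suc 0) = 1" by (simp add: Ycoef_def)

definition Ys :: B where "Ys = DS.fcm Y"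
definition Yt :: B where "Yt = fps_deriv Y"

definition Ls :: "B \<Rightarrow> B" where
  "Ls F = (1 - fps_X) * DS.fcm F + fps_X ^ 2 * fps_deriv F"

lemma Ls_nth: "Ls F $ N = (if N = 0 then DS.fcm F $ 0
   else DS.fcm F $ N - DS.fcm F $ (N - 1) + of_nat (N - 1) * F $ (N - 1))"
proof -
  have "(fps_X ^ 2 * fps_deriv F) $ N = (if N = 0 then 0 else of_nat (N - 1) * F $ (N - 1))"
  proof -
    consider "N = 0" | "N = 1" | M where "N = Suc (Suc M)" by (metis One_nat_def not0_implies_Suc)
    then show ?thesis
    proof cases
      case 3
      then show ?thesis by (simp add: fps_X_power_mult_nth del: of_nat_Suc)
    qed (simp_all add: fps_X_power_mult_nth)
  qed
  then show ?thesis
    by (simp add: Ls_def algebra_simps)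
qed

lemma Ls_Y: "Ls Y = 1"
proof (rule fps_ext)
  fix N
  show "Ls Y $ N = 1 $ N"
  proof (cases N)
    case 0
    have "fps_deriv (Y $ 0) = 1"
      by (rule fps_ext) (auto simp: Y_nth_nth Ycoef_def)
    then show ?thesis using 0 by (simp add: Ls_nth)
  next
    case (Suc M)
    have "fps_deriv (Y $ Suc M) - fps_deriv (Y $ M) + of_nat M * Y $ M = 0"
    proof (rule fps_ext)
      fix j
      have "cR (of_nat (Suc j) * Ycoef (Suc M) (Suc j) - of_nat (Suc j) * Ycoef M (Suc j) + of_nat M * Ycoef M j) = 0"
        by (subst Ycoef_rec) simp
      then show "(fps_deriv (Y $ Suc M) - fps_deriv (Y $ M) + of_nat M * Y $ M) $ j = 0 $ j"
        by (simp add: Y_nth_nth cR_add cR_diff cR_mult cR_of_nat fps_of_nat[symmetric] del: of_nat_Suc)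
    qed
    then show ?thesis using Suc by (simp add: Ls_nth)
  qed
qed

lemma Ls_add: "Ls (F + G) = Ls F + Ls G"
  by (simp add: Ls_def DS.fcm_add algebra_simps)

lemma Ls_diff: "Ls (F - G) = Ls F - Ls G"
  by (simp add: Ls_def DS.fcm_diff algebra_simps)

lemma Ls_mult: "Ls (F * G) = Ls F * G + F * Ls G"
  by (simp add: Ls_def DS.fcm_mult algebra_simps)

lemma Ls_1: "Ls 1 = 0"
  by (simp add: Ls_def)

lemma Ls_X: "Ls fps_X = fps_X ^ 2"
  by (simp add: Ls_def)

lemma DS_fcm_deriv: "DS.fcm (fps_deriv F) = fps_deriv (DS.fcm F)"
  by (rule fps_ext) (simp add: fps_of_nat[symmetric] del: of_nat_Suc)

lemma Ls_Ys: "Ls Ys = 0"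
proof -
  have "Ls Ys = DS.fcm (Ls Y)"
    by (simp add: Ls_def Ys_def DS.fcm_mult DS.fcm_add DS.fcm_diff DS_fcm_deriv power2_eq_square)
  then show ?thesis by (simp add: Ls_Y)
qed

definition ev0 :: "B \<Rightarrow> R fps" where
  "ev0 F = Abs_fps (\<lambda>N. F $ N $ 0)"

lemma ev0_add: "ev0 (F + G) = ev0 F + ev0 G" by (rule fps_ext) (simp add: ev0_def)
lemma ev0_diff: "ev0 (F - G) = ev0 F - ev0 G" by (rule fps_ext) (simp add: ev0_def)
lemma ev0_mult: "ev0 (F * G) = ev0 F * ev0 G"
  by (rule fps_ext) (simp add: ev0_def fps_mult_nth fps_sum_nth)
lemma ev0_1: "ev0 1 = 1" by (rule fps_ext) (simp add: ev0_def)
lemma ev0_X: "ev0 fps_X = fps_X" by (rule fps_ext) (simp add: ev0_def fps_X_def)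
lemma ev0_Y: "ev0 Y = 0" by (rule fps_ext) (simp add: ev0_def Y_nth_nth Ycoef_0)
lemma ev0_Ys: "ev0 Ys = Abs_fps (\<lambda>_. 1)"
  by (rule fps_ext) (simp add: ev0_def Ys_def Y_nth_nth Ycoef_1')

lemma uniq:
  assumes "Ls E = fps_X * E" "ev0 E = 0"
  shows "E = 0"
proof -
  have "E $ N = 0" for N
  proof (induction N rule: less_induct)
    case (less N)
    have h: "Ls E $ N = (fps_X * E) $ N" using assms(1) by simp
    have "fps_deriv (E $ N) = 0"
    proof (cases N)
      case 0
      then show ?thesis using h by (simp add: Ls_nth)
    next
      case (Suc M)
      then have "E $ M = 0" using less by simp
      then show ?thesis using h Suc by (simp add: Ls_nth)
    qed
    moreover have "E $ N $ 0 = 0"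
      using assms(2) by (metis ev0_def fps_zero_nth fps_nth_Abs_fps)
    ultimately show "E $ N = 0"
    proof -
      assume d: "fps_deriv (E $ N) = 0" and z: "E $ N $ 0 = 0"
      show "E $ N = 0"
      proof (rule fps_ext)
        fix j show "E $ N $ j = 0 $ j"
        proof (cases j)
          case 0 then show ?thesis using z by simp
        next
          case (Suc i)
          have "fps_deriv (E $ N) $ i = 0" by (simp only: d fps_zero_nth)
          then have "E $ N $ Suc i = 0" by (metis R_cancel_nat Suc_eq_plus1 fps_deriv_nth)
          then show ?thesis using Suc by simp
        qed
      qed
    qed
  qed
  then show ?thesis by (intro fps_ext) simp
qed

lemma Y_main: "Ys * (1 + fps_X * Y - fps_X) = 1 + fps_X * Y"
proof -
  define E where "E = Ys * (1 + fps_X * Y - fps_X) - (1 + fps_X * Y)"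
  have LsD: "Ls (1 + fps_X * Y - fps_X) = fps_X ^ 2 * Y + fps_X - fps_X ^ 2"
    by (simp add: Ls_add Ls_diff Ls_mult Ls_1 Ls_X Ls_Y)
  have "Ls E = Ys * (fps_X ^ 2 * Y + fps_X - fps_X ^ 2) - (fps_X ^ 2 * Y + fps_X)"
    unfolding E_def by (simp add: Ls_add Ls_diff Ls_mult Ls_1 Ls_X Ls_Y Ls_Ys LsD)
  also have "\<dots> = fps_X * E"
    by (simp add: E_def algebra_simps power2_eq_square)
  finally have 1: "Ls E = fps_X * E" .
  have g: "Abs_fps (\<lambda>_. 1 :: R) * (1 - fps_X) = 1"
  proof (rule fps_ext)
    fix n show "(Abs_fps (\<lambda>_. 1 :: R) * (1 - fps_X)) $ n = 1 $ n"
      by (cases n) (simp_all add: algebra_simps)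
  qed
  have 2: "ev0 E = 0"
    unfolding E_def by (simp add: ev0_add ev0_diff ev0_mult ev0_1 ev0_X ev0_Y ev0_Ys g)
  have "E = 0" by (rule uniq[OF 1 2])
  then show ?thesis by (simp add: E_def)
qed

lemma Y_lin: "1 + fps_X * Ys - fps_X ^ 2 * Yt = Ys"
proof -
  have "Ls Y = 1" by (rule Ls_Y)
  then have "(1 - fps_X) * Ys + fps_X ^ 2 * Yt = 1" by (simp add: Ls_def Ys_def Yt_def)
  then show ?thesis by (simp add: algebra_simps)
qed



lemma PK0: "PK $ 0 = 1" by (simp add: PK_def)

lemma PKinv_PK: "PKinv * PK = 1"
  unfolding PKinv_def by (rule fps_left_inverse) (simp add: PK0)

lemma PK_PKinv: "PK * PKinv = 1"
  using PKinv_PK by (simp add: mult.commute)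

definition Aln :: "R fps" where "Aln = Abs_fps (\<lambda>m. cR (fps_ln (1::rat) $ m))"

lemma logPK_def': "logPK = Aln oo (PK - 1)"
  by (simp add: logPK_def Aln_def)

lemma B0: "(PK - 1) $ 0 = 0" by (simp add: PK0)

lemma logPK0: "logPK $ 0 = 0"
  by (simp add: logPK_def' Aln_def fps_ln_nth)

definition Tt :: "R fps" where "Tt = fps_const varT * fps_X * PKinv"

lemma Tt0: "Tt $ 0 = 0" by (simp add: Tt_def mult.assoc)

definition Ev :: "B \<Rightarrow> R fps" where
  "Ev A = PS Tt (\<lambda>n. A $ n oo logPK)"

lemma Ev_add: "Ev (A + C) = Ev A + Ev C"
  by (simp add: Ev_def fps_compose_add_distrib PS_add)

lemma Ev_diff: "Ev (A - C) = Ev A - Ev C"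
  by (simp add: Ev_def fps_compose_sub_distrib PS_diff)

lemma Ev_mult: "Ev (A * C) = Ev A * Ev C"
proof -
  have "(A * C) $ n oo logPK = (\<Sum>i\<le>n. (A $ i oo logPK) * (C $ (n - i) oo logPK))" for n
    by (simp only: fps_mult_nth atLeast0AtMost fps_compose_sum_distrib fps_compose_mult_distrib[OF logPK0])
  then show ?thesis by (simp add: Ev_def PS_mult[OF Tt0])
qed

lemma Ev_1: "Ev 1 = 1"
proof -
  have "(\<lambda>n. (1::B) $ n oo logPK) = (\<lambda>n. if n = 0 then 1 else 0)" by auto
  then show ?thesis by (simp add: Ev_def PS_single0)
qed

lemma Ev_X: "Ev fps_X = Tt"
proof -
  have "(\<lambda>n. (fps_X::B) $ n oo logPK) = (\<lambda>n. if n = 1 then 1 else 0)"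
    by (auto simp: fps_X_def)
  then show ?thesis using PS_single1[OF Tt0] by (simp add: Ev_def)
qed

lemma Ev_power: "Ev (A ^ n) = Ev A ^ n"
  by (induction n) (simp_all add: Ev_1 Ev_mult)

lemma Y_sum: "Y $ n = (\<Sum>k\<le>n. fps_const (of_int ((-1) ^ (n - k) * int (stirling n k)) * cR (1 / fact (n - k + 1)))
              * fps_X ^ (n - k + 1))"
proof (rule fps_ext)
  fix j
  define c where "c k = of_int ((-1) ^ (n - k) * int (stirling n k)) * cR (1 / fact (n - k + 1))" for k
  have "(\<Sum>k\<le>n. fps_const (c k) * fps_X ^ (n - k + 1)) $ j = (\<Sum>k\<le>n. c k * (fps_X ^ (n - k + 1) $ j))"
    by (simp only: fps_sum_nth fps_mult_left_const_nth)
  also have "\<dots> = (\<Sum>k\<le>n. if k = n + 1 - j then (if 1 \<le> j \<and> j \<le> n + 1 then c k else 0) else 0)"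
  proof (rule sum.cong)
    fix k assume k: "k \<in> {..n}"
    have "(j = n - k + 1) \<longleftrightarrow> (k = n + 1 - j \<and> 1 \<le> j \<and> j \<le> n + 1)" using k by auto
    then show "c k * (fps_X ^ (n - k + 1) $ j) = (if k = n + 1 - j then (if 1 \<le> j \<and> j \<le> n + 1 then c k else 0) else 0)"
      by (auto simp: fps_X_power_iff)
  qed simp
  also have "\<dots> = (if 1 \<le> j \<and> j \<le> n + 1 then c (n + 1 - j) else 0)"
    by (subst sum.delta) auto
  also have "\<dots> = cR (Ycoef n j)"
  proof (cases "1 \<le> j \<and> j \<le> n + 1")
    case True
    then have e: "n - (n + 1 - j) + 1 = j" "n - (n + 1 - j) = j - 1" by auto
    have "c (n + 1 - j) = cR (of_int ((-1) ^ (j - 1) * int (stirling n (n + 1 - j)))) * cR (1 / fact j)"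
      unfolding c_def e(1) unfolding e(2) by (simp only: cR_of_int)
    also have "\<dots> = cR (Ycoef n j)"
      using True by (simp add: Ycoef_def flip: cR_mult)
    finally show ?thesis using True by simp
  next
    case False
    then have "Ycoef n j = 0" by (auto simp: Ycoef_def)
    then show ?thesis using False by auto
  qed
  finally show "Y $ n $ j = (\<Sum>k\<le>n. fps_const (c k) * fps_X ^ (n - k + 1)) $ j"
    by (simp add: Y_nth_nth)
qed

lemma Lterm_eq: "Lterm n = Tt ^ n * (Y $ n oo logPK)"
proof -
  have X: "fps_X ^ m oo logPK = logPK ^ m" for m
  proof -
    have "fps_X oo logPK = logPK"
      by (rule fps_ext) (simp add: fps_X_fps_compose logPK0)
    then show ?thesis by (simp flip: fps_compose_power[OF logPK0])
  qed
  have "Y $ n oo logPK = (\<Sum>k\<le>n. fps_const (of_int ((-1) ^ (n - k) * int (stirling n k)) * cR (1 / fact (n - k + 1)))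
              * logPK ^ (n - k + 1))"
    unfolding Y_sum fps_compose_sum_distrib
    by (rule sum.cong) (simp_all only: fps_compose_mult_distrib[OF logPK0] fps_const_compose X)
  then show ?thesis
    by (simp add: Lterm_def Tt_def power_mult_distrib algebra_simps)
qed

lemma Ltail_Ev: "Ltail = Ev Y"
  by (rule fps_ext) (simp add: Ltail_def Ev_def PS_def ssum_nth Lterm_eq fps_sum_nth)


definition Pf :: "R fps" where "Pf = PK + fps_const varT * fps_X * Ltail"

lemma geo: "(1 + fps_X) * Abs_fps (\<lambda>n. cR ((-1) ^ n)) = 1"
proof (rule fps_ext)
  fix n show "((1 + fps_X) * Abs_fps (\<lambda>n. cR ((-1) ^ n))) $ n = 1 $ n"
    by (cases n) (simp_all add: algebra_simps cR_uminus)
qed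

lemma deriv_Aln: "fps_deriv Aln = Abs_fps (\<lambda>n. cR ((-1) ^ n))"
proof (rule fps_ext)
  fix n
  have "of_nat (n + 1) * cR ((- 1) ^ n / of_nat (Suc n)) = cR ((-1) ^ n)"
    by (simp add: cR_of_nat[symmetric] flip: cR_mult del: of_nat_Suc)
  then show "fps_deriv Aln $ n = Abs_fps (\<lambda>n. cR ((-1) ^ n)) $ n"
    by (simp add: Aln_def fps_ln_nth del: of_nat_Suc)
qed

lemma deriv_Aln_compose: "fps_deriv Aln oo (PK - 1) = PKinv"
proof -
  have "((1 + fps_X) oo (PK - 1)) * (fps_deriv Aln oo (PK - 1)) = 1"
    unfolding deriv_Aln using geo
    by (metis fps_compose_1 fps_compose_mult_distrib[OF B0])
  moreover have "(1 + fps_X) oo (PK - 1) = PK"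
  proof -
    have "fps_X oo (PK - 1) = PK - 1"
      using B0 by (intro fps_ext) (simp add: fps_X_fps_compose)
    then show ?thesis by (simp add: fps_compose_add_distrib)
  qed
  ultimately have "PK * (fps_deriv Aln oo (PK - 1)) = 1" by simp
  then have "PKinv * (PK * (fps_deriv Aln oo (PK - 1))) = PKinv" by simp
  then show ?thesis by (simp add: PKinv_PK flip: mult.assoc)
qed

locale derR = der d for d :: "R \<Rightarrow> R" +
  fixes e0 e1 :: R
  assumes dT: "d varT = 0" and dC: "\<And>c. d (cR c) = 0"
      and dv: "d varV = e0" and dq: "d varQ = e1"
begin

definition dPK :: "R fps" where "dPK = fps_const e0 * fps_X + fps_const e1 * fps_X ^ 2"

lemma fcm_PK: "fcm PK = dPK"
  by (simp add: PK_def dPK_def fcm_add fcm_mult dv dq)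

lemma fcm_logPK: "fcm logPK = dPK * PKinv"
proof -
  have "fcm logPK = fcm (PK - 1) * (fps_deriv Aln oo (PK - 1))"
    unfolding logPK_def' by (rule fcm_compose) (simp_all add: Aln_def dC PK0)
  then show ?thesis by (simp add: deriv_Aln_compose fcm_diff fcm_PK)
qed

lemma fcm_PKinv: "fcm PKinv = - (PKinv * PKinv * dPK)"
  using fcm_inverse[OF PKinv_PK] by (simp add: fcm_PK)

lemma fcm_TX: "fcm (fps_const varT * fps_X) = 0"
  by (simp add: fcm_mult dT)

lemma fcm_Tt: "fcm Tt = - (Tt * PKinv * dPK)"
  unfolding Tt_def by (simp add: fcm_mult fcm_TX fcm_PKinv dT algebra_simps)

lemma fcm_Ev:
  assumes "\<And>n j. d (A $ n $ j) = 0"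
  shows "fcm (Ev A) = fcm Tt * Ev (fps_deriv A) + fcm logPK * Ev (DS.fcm A)"
proof -
  have "fcm (Ev A) = fcm Tt * PS Tt (\<lambda>n. of_nat (Suc n) * (A $ Suc n oo logPK)) + PS Tt (\<lambda>n. fcm (A $ n oo logPK))"
    unfolding Ev_def by (rule fcm_PS[OF Tt0])
  also have "PS Tt (\<lambda>n. of_nat (Suc n) * (A $ Suc n oo logPK)) = Ev (fps_deriv A)"
    unfolding Ev_def
    by (simp add: fps_compose_mult_distrib[OF logPK0] fps_of_nat[symmetric] del: of_nat_Suc)
  also have "PS Tt (\<lambda>n. fcm (A $ n oo logPK)) = PS Tt (\<lambda>n. fcm logPK * (fps_deriv (A $ n) oo logPK))"
    using assms by (simp add: fcm_compose logPK0)
  also have "\<dots> = fcm logPK * Ev (DS.fcm A)"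
    unfolding Ev_def by (simp add: PS_cmult[OF Tt0])
  finally show ?thesis .
qed

lemma TtPK: "Tt * PK = fps_const varT * fps_X"
  unfolding Tt_def by (simp add: PKinv_PK flip: mult.assoc)

lemma fcm_Pf: "fcm Pf = dPK * Ev Ys"
proof -
  have dY: "d (Y $ n $ j) = 0" for n j by (simp add: Y_nth_nth dC)
  have "fcm Ltail = dPK * PKinv * (Ev Ys - Tt * Ev Yt)"
    unfolding Ltail_Ev fcm_Ev[OF dY] fcm_Tt fcm_logPK Ys_def Yt_def
    by (simp add: algebra_simps)
  then have "fcm Pf = dPK + Tt * PK * (dPK * PKinv * (Ev Ys - Tt * Ev Yt))"
    unfolding Pf_def by (simp add: fcm_add fcm_mult fcm_TX fcm_PK TtPK dT)
  also have "\<dots> = dPK + dPK * (Tt * (Ev Ys - Tt * Ev Yt)) * (PK * PKinv)"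
    by (simp only: mult_ac)
  also have "\<dots> = dPK * (1 + Tt * Ev Ys - Tt ^ 2 * Ev Yt)"
    by (simp add: PK_PKinv algebra_simps power2_eq_square)
  also have "1 + Tt * Ev Ys - Tt ^ 2 * Ev Yt = Ev (1 + fps_X * Ys - fps_X ^ 2 * Yt)"
    by (simp add: Ev_add Ev_diff Ev_mult Ev_1 Ev_X Ev_power)
  also have "\<dots> = Ev Ys" by (simp add: Y_lin)
  finally show ?thesis .
qed

lemma Pf_Ev: "Pf = PK * Ev (1 + fps_X * Y)"
  unfolding Pf_def by (simp add: Ev_add Ev_mult Ev_1 Ev_X Ltail_Ev flip: TtPK) (simp add: algebra_simps)

lemma Pf_minus: "Pf - fps_const varT * fps_X = PK * Ev (1 + fps_X * Y - fps_X)"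
  unfolding Pf_def by (simp add: Ev_add Ev_diff Ev_mult Ev_1 Ev_X Ltail_Ev flip: TtPK) (simp add: algebra_simps)

lemma key_fps: "fcm Pf * (Pf - fps_const varT * fps_X) = dPK * Pf"
proof -
  have "fcm Pf * (Pf - fps_const varT * fps_X) = (dPK * Ev Ys) * (PK * Ev (1 + fps_X * Y - fps_X))"
    by (simp only: fcm_Pf Pf_minus)
  also have "\<dots> = dPK * PK * (Ev Ys * Ev (1 + fps_X * Y - fps_X))"
    by (simp only: mult_ac)
  also have "\<dots> = dPK * PK * Ev (1 + fps_X * Y)"
    by (simp only: Y_main flip: Ev_mult)
  also have "\<dots> = dPK * Pf" by (simp only: Pf_Ev mult.assoc)
  finally show ?thesis .
qed

end



lemma XinvX: "fls_X_inv * fls_X = (1 :: 'a::comm_ring_1 fls)"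
  by (rule fls_eqI) (simp add: fls_X_inv_times_conv_shift)

lemma Pf0: "Pf $ 0 = 1"
  by (simp add: Pf_def PK0 mult.assoc)

lemma L0_eq: "L0 = fls_X_inv * fps_to_fls Pf"
proof -
  have "fps_to_fls Pf = 1 + fls_const varV * fls_X + fls_const varQ * fls_X ^ 2
          + fls_const varT * fls_X * fps_to_fls Ltail"
    by (simp add: Pf_def PK_def fls_times_fps_to_fls fps_to_fls_power)
  then have "fls_X_inv * fps_to_fls Pf = fls_X_inv + fls_const varV * (fls_X_inv * fls_X)
     + fls_const varQ * fls_X * (fls_X_inv * fls_X) + fls_const varT * (fls_X_inv * fls_X) * fps_to_fls Ltail"
    by (simp add: algebra_simps power2_eq_square)
  then show ?thesis by (simp add: XinvX L0_def)
qed

lemma L0_nth: "L0 $$ n = (if n < -1 then 0 else Pf $ nat (n + 1))"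
  by (simp add: L0_eq fls_X_inv_times_conv_shift)

lemma L0_lbl: "lbl L0 (-1)"
  by (simp add: lbl_def L0_nth)

lemma L0_m1: "L0 $$ (-1) = 1"
  by (simp add: L0_nth Pf0)

lemma L0_subdeg: "fls_subdegree L0 = -1"
  by (rule fls_subdegree_eqI) (simp_all add: L0_m1 L0_nth Pf0)

definition Linv :: "R fls" where "Linv = fls_left_inverse L0 1"

lemma Linv_L0: "Linv * L0 = 1"
  unfolding Linv_def by (rule fls_left_inverse) (simp add: L0_subdeg L0_m1)

lemma Linv_lbl: "lbl Linv 1"
proof -
  have "fls_subdegree Linv = 1"
    unfolding Linv_def using fls_lr_inverse_subdegree(1)[of 1 L0] by (simp add: L0_subdeg)
  then show ?thesis using lbl_subdegree[of Linv] by simp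
qed

lemma Lpow_alt: "Lpow n = (if 0 \<le> n then L0 ^ nat n else Linv ^ nat (- n))"
  unfolding Lpow_def Linv_def by (rule refl)

lemma Lpow_mult: "Lpow (n - 1) * L0 = Lpow n"
proof (cases "n \<ge> 1")
  case True
  then have "nat n = Suc (nat (n - 1))" by simp
  then show ?thesis using True by (simp add: Lpow_alt mult.commute)
next
  case False
  then have "nat (- (n - 1)) = Suc (nat (- n))" by simp
  then have "Lpow (n - 1) * L0 = Linv ^ nat (- n) * (Linv * L0)"
    using False by (simp add: Lpow_alt algebra_simps)
  also have "\<dots> = Linv ^ nat (- n)" by (simp add: Linv_L0)
  also have "\<dots> = Lpow n" using False by (cases "n = 0") (simp_all add: Lpow_alt)
  finally show ?thesis .
qed

lemma Lpow_lbl: "lbl (Lpow n) (- n)"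
proof (cases "n \<ge> 0")
  case True
  then show ?thesis using lbl_power[OF L0_lbl, of "nat n"] by (simp add: Lpow_alt)
next
  case False
  then show ?thesis using lbl_power[OF Linv_lbl, of "nat (- n)"] by (simp add: Lpow_alt)
qed

context derR
begin

definition W :: "R fls" where "W = fls_cm L0"

lemma fls_cm_shift: "fls_cm (fls_X_inv * fps_to_fls Q) = fls_X_inv * fps_to_fls (fcm Q)"
  by (rule fls_eqI) (simp add: fls_X_inv_times_conv_shift)

lemma W_eq: "W = fls_X_inv * fps_to_fls (fcm Pf)"
  unfolding W_def L0_eq by (rule fls_cm_shift)

lemma W_lbl: "lbl W 0"
proof -
  have "W $$ n = 0" if "n < 0" for n
  proof (cases "n = -1")
    case True
    then show ?thesis by (simp add: W_eq fls_X_inv_times_conv_shift Pf0)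
  next
    case False
    then show ?thesis using that by (simp add: W_eq fls_X_inv_times_conv_shift)
  qed
  then show ?thesis by (simp add: lbl_def)
qed

lemma key_fls: "W * (L0 - fls_const varT) = (fls_const e0 + fls_const e1 * fls_X) * L0"
proof -
  have k: "fps_to_fls (fcm Pf) * fps_to_fls (Pf - fps_const varT * fps_X) = fps_to_fls dPK * fps_to_fls Pf"
    using arg_cong[OF key_fps, of fps_to_fls] by (simp only: fls_times_fps_to_fls)
  have m: "L0 - fls_const varT = fls_X_inv * fps_to_fls (Pf - fps_const varT * fps_X)"
  proof -
    have "fls_X_inv * fps_to_fls (Pf - fps_const varT * fps_X) = fls_X_inv * fps_to_fls Pf - fls_const varT * (fls_X_inv * fls_X)"
      by (simp only: fps_to_fls_minus fls_times_fps_to_fls fps_const_to_fls fps_X_to_fls ring_distribs mult_ac)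
    then show ?thesis by (simp only: XinvX L0_eq mult_1_right)
  qed
  have dp: "fps_to_fls dPK = fls_X * (fls_const e0 + fls_const e1 * fls_X)"
    by (simp only: dPK_def fps_to_fls_plus fls_times_fps_to_fls fps_const_to_fls fps_X_to_fls
        fps_to_fls_power power2_eq_square ring_distribs mult_ac)
  have "W * (L0 - fls_const varT) = fls_X_inv * fls_X_inv * (fps_to_fls (fcm Pf) * fps_to_fls (Pf - fps_const varT * fps_X))"
    unfolding W_eq m by (simp only: mult_ac)
  also have "\<dots> = (fls_X_inv * fls_X) * (fls_const e0 + fls_const e1 * fls_X) * (fls_X_inv * fps_to_fls Pf)"
    unfolding k dp by (simp only: mult_ac)
  also have "\<dots> = (fls_const e0 + fls_const e1 * fls_X) * L0"
    by (simp only: XinvX L0_eq mult_1_left)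
  finally show ?thesis .
qed

lemma fls_cm_Lpow: "fls_cm (Lpow n) = of_int n * Lpow (n - 1) * W"
proof (cases "n \<ge> 0")
  case True
  show ?thesis
  proof (cases "n = 0")
    case True
    have "fls_cm (Lpow n) = 0"
      by (rule fls_eqI) (simp add: Lpow_alt True)
    then show ?thesis using True by simp
  next
    case False
    then have e: "nat n - 1 = nat (n - 1)" "n - 1 \<ge> 0" using True by auto
    have "fls_cm (Lpow n) = fls_cm (L0 ^ nat n)" using True by (simp only: Lpow_alt if_True)
    also have "\<dots> = of_nat (nat n) * L0 ^ (nat n - 1) * fls_cm L0" by (rule fls_cm_power)
    also have "L0 ^ (nat n - 1) = Lpow (n - 1)" using e by (simp only: Lpow_alt if_True)
    also have "(of_nat (nat n) :: R fls) = of_int n" using True by (rule of_nat_nat)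
    finally show ?thesis by (simp only: W_def)
  qed
next
  case False
  define m where "m = nat (- n)"
  have m: "m \<ge> 1" "n = - int m" "nat (- (n - 1)) = Suc m" using False by (auto simp: m_def)
  have "fls_cm (Lpow n) = fls_cm (Linv ^ m)"
    using False by (simp only: Lpow_alt m_def if_False)
  also have "\<dots> = of_nat m * Linv ^ (m - 1) * fls_cm Linv"
    by (rule fls_cm_power)
  also have "fls_cm Linv = - (Linv * Linv * W)"
    unfolding W_def by (rule fls_cm_inverse[OF Linv_L0])
  also have "of_nat m * Linv ^ (m - 1) * - (Linv * Linv * W) = - of_nat m * (Linv ^ (m - 1) * Linv * Linv) * W"
    by (simp only: mult_ac mult_minus_left mult_minus_right)
  also have "Linv ^ (m - 1) * Linv * Linv = Linv ^ Suc m"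
  proof -
    obtain m' where "m = Suc m'" using m(1) by (cases m) auto
    then show ?thesis by (simp only: power_Suc2 diff_Suc_1)
  qed
  also have "Linv ^ Suc m = Lpow (n - 1)"
    using False m(3) by (simp only: Lpow_alt) simp
  also have "- (of_nat m :: R fls) = of_int n" using m(2) by simp
  finally show ?thesis .
qed

definition cc :: "int \<Rightarrow> int \<Rightarrow> R" where "cc n k = Lpow n $$ (- k)"
definition uu :: "int \<Rightarrow> int \<Rightarrow> R" where "uu n k = (Lpow (n - 1) * W) $$ (- k)"

lemma cc_zero: "n < k \<Longrightarrow> cc n k = 0"
  using Lpow_lbl[of n] by (simp add: cc_def lbl_def)

lemma uu_zero: "n - 1 < k \<Longrightarrow> uu n k = 0"
  using lbl_mult[OF Lpow_lbl[of "n - 1"] W_lbl] by (simp add: uu_def lbl_def)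

lemma d_cc: "d (cc n k) = of_int n * uu n k"
proof -
  have "d (cc n k) = fls_cm (Lpow n) $$ (- k)" by (simp add: cc_def)
  also have "\<dots> = (fls_const (of_int n) * (Lpow (n - 1) * W)) $$ (- k)"
    by (simp add: fls_cm_Lpow fls_of_int mult.assoc)
  finally show ?thesis by (simp add: uu_def)
qed

lemma uu_rec: "uu (n + 1) k - varT * uu n k = e0 * cc n k + e1 * cc n (k + 1)"
proof -
  have ln: "Lpow n = Lpow (n - 1) * L0" by (rule Lpow_mult[symmetric])
  have "Lpow n * W - fls_const varT * (Lpow (n - 1) * W) = Lpow (n - 1) * (W * (L0 - fls_const varT))"
    unfolding ln by (simp only: ring_distribs mult_ac)
  also have "\<dots> = (fls_const e0 + fls_const e1 * fls_X) * (Lpow (n - 1) * L0)"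
    by (simp only: key_fls mult_ac)
  also have "\<dots> = fls_const e0 * Lpow n + fls_const e1 * (fls_X * Lpow n)"
    unfolding ln by (simp only: ring_distribs mult_ac)
  finally have e: "Lpow n * W - fls_const varT * (Lpow (n - 1) * W) = fls_const e0 * Lpow n + fls_const e1 * (fls_X * Lpow n)" .
  have x: "(fls_X * Lpow n) $$ (- k) = cc n (k + 1)"
    by (simp add: cc_def fls_X_times_conv_shift)
  have "(Lpow n * W - fls_const varT * (Lpow (n - 1) * W)) $$ (- k) = e0 * cc n k + e1 * cc n (k + 1)"
    unfolding e fls_plus_nth fls_mult_const_nth x by (simp only: cc_def)
  moreover have "(Lpow n * W - fls_const varT * (Lpow (n - 1) * W)) $$ (- k) = uu (n + 1) k - varT * uu n k"
    unfolding fls_minus_nth fls_mult_const_nth uu_def by simp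
  ultimately show ?thesis by simp
qed

end



lemma fps_prod_nth0: "(prod f A) $ 0 = (\<Prod>i\<in>A. (f i :: 'a::comm_ring_1 fps) $ 0)"
  by (induction A rule: infinite_finite_induct) auto

definition Qp :: "nat \<Rightarrow> R fps" where
  "Qp m = (\<Prod>j\<in>{1..m}. fps_const (of_nat j) + fps_const varT * fps_X)"

lemma Qp0: "Qp m $ 0 = of_nat (fact m)"
proof -
  have "Qp m $ 0 = (\<Prod>j\<in>{1..m}. (of_nat j :: R))"
    by (simp add: Qp_def fps_prod_nth0)
  also have "\<dots> = of_nat (\<Prod>{1..m})" by simp
  also have "\<dots> = of_nat (fact m)" by (simp add: fact_prod)
  finally show ?thesis .
qed

lemma Qp_Suc: "Qp (Suc m) = Qp m * (fps_const (of_nat (Suc m)) + fps_const varT * fps_X)"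
  by (simp add: Qp_def prod.cl_ivl_Suc)

lemma recipfact_pos: "0 \<le> n \<Longrightarrow> recipfact n = fps_left_inverse (Qp (nat n)) (cR (1 / fact (nat n)))"
  by (simp add: recipfact_def Qp_def)

lemma recipfact_neg: "n < 0 \<Longrightarrow> recipfact n = (\<Prod>j\<in>{0..<nat (- n)}. fps_const varT * fps_X - fps_const (of_nat j))"
  by (simp add: recipfact_def)

lemma rf_inv: "0 \<le> n \<Longrightarrow> recipfact n * Qp (nat n) = 1"
proof -
  assume n: "0 \<le> n"
  have "cR (1 / fact (nat n)) * Qp (nat n) $ 0 = 1"
  proof -
    have "cR (1 / fact (nat n)) * Qp (nat n) $ 0 = cR (1 / fact (nat n) * of_nat (fact (nat n)))"
      by (simp only: Qp0 cR_of_nat[symmetric] cR_mult)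
    also have "1 / fact (nat n) * (of_nat (fact (nat n)) :: rat) = 1" by simp
    finally show ?thesis by simp
  qed
  then show ?thesis using n by (simp add: recipfact_pos fps_left_inverse)
qed

lemma rf_rec: "recipfact n * (fps_const (of_int n) + fps_const varT * fps_X) = recipfact (n - 1)"
proof -
  consider "n \<ge> 1" | "n = 0" | "n < 0" by linarith
  then show ?thesis
  proof cases
    case 1
    define m where "m = nat (n - 1)"
    have m: "nat n = Suc m" "of_int n = (of_nat (Suc m) :: R)" "0 \<le> n - 1" "0 \<le> n"
      using 1 by (auto simp: m_def)
    have r1: "Qp m * recipfact (n - 1) = 1"
      using rf_inv[OF m(3)] unfolding m_def[symmetric] by (simp only: mult.commute)
    have q: "Qp (nat n) = Qp m * (fps_const (of_int n) + fps_const varT * fps_X)"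
      by (simp only: m(1) m(2) Qp_Suc)
    have "recipfact n * (fps_const (of_int n) + fps_const varT * fps_X)
        = (recipfact n * (fps_const (of_int n) + fps_const varT * fps_X)) * (Qp m * recipfact (n - 1))"
      by (simp only: r1 mult_1_right)
    also have "\<dots> = (recipfact n * (Qp m * (fps_const (of_int n) + fps_const varT * fps_X))) * recipfact (n - 1)"
      by (simp only: mult_ac)
    also have "\<dots> = recipfact (n - 1)"
      by (simp only: q[symmetric] rf_inv[OF m(4)] mult_1_left)
    finally show ?thesis .
  next
    case 2
    have "recipfact 0 * Qp 0 = 1" using rf_inv[of 0] by simp
    then have r0: "recipfact 0 = 1" by (simp add: Qp_def)
    have "recipfact (-1) = fps_const varT * fps_X"
      by (simp add: recipfact_neg)
    then show ?thesis using 2 r0 by simp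
  next
    case 3
    define m where "m = nat (- n)"
    have m: "nat (- (n - 1)) = Suc m" "of_int n = - (of_nat m :: R)" "n - 1 < 0"
      using 3 by (auto simp: m_def)
    have rr: "recipfact (n - 1) = recipfact n * (fps_const varT * fps_X - fps_const (of_nat m))"
      unfolding recipfact_neg[OF m(3)] recipfact_neg[OF 3] m(1) m_def[symmetric]
      by (simp only: prod.atLeast0_lessThan_Suc)
    have cn: "fps_const (of_int n) = - fps_const (of_nat m :: R)"
      using m(2) by simp
    have c: "fps_const (of_int n) + fps_const varT * fps_X = fps_const varT * fps_X - fps_const (of_nat m)"
      unfolding cn by (simp only: diff_conv_add_uminus add.commute)
    show ?thesis unfolding rr c ..
  qed
qed

definition al :: "int \<Rightarrow> int \<Rightarrow> R" where "al n m = zterm n $$ m"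

lemma al_eq: "al n m = (if m < n then 0 else recipfact n $ nat (m - n))"
  by (simp add: al_def zterm_def)

lemma al_zero: "m < n \<Longrightarrow> al n m = 0"
  by (simp add: al_eq)

lemma al_rec: "of_int n * al n m = al (n - 1) (m - 1) - varT * al n (m - 1)"
proof (cases "m < n")
  case True
  then show ?thesis by (simp add: al_eq)
next
  case False
  define j where "j = nat (m - n)"
  have e0: "recipfact n * (fps_const (of_int n) + fps_const varT * fps_X)
      = fps_const (of_int n) * recipfact n + fps_const varT * (fps_X * recipfact n)"
    by (simp only: ring_distribs mult_ac)
  have e: "recipfact (n - 1) $ j = of_int n * recipfact n $ j + varT * (if j = 0 then 0 else recipfact n $ (j - 1))"
    unfolding rf_rec[of n, symmetric] e0 fps_add_nth fps_mult_left_const_nth fps_X_mult_nth ..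
  have a1: "al (n - 1) (m - 1) = recipfact (n - 1) $ j" using False by (simp add: al_eq j_def)
  have a2: "al n (m - 1) = (if j = 0 then 0 else recipfact n $ (j - 1))"
  proof -
    have nn: "nat (m - 1 - n) = nat (m - n) - 1" if "m \<noteq> n"
    proof -
      have t: "1 \<le> m - n" using False that by simp
      have "m - 1 - n = (m - n) - 1" by simp
      then show ?thesis using nat_diff_distrib[of 1 "m - n"] t by simp
    qed
    show ?thesis using False nn by (auto simp: al_eq j_def)
  qed
  have a3: "al n m = recipfact n $ j" using False by (simp add: al_eq j_def)
  show ?thesis unfolding a1 a2 a3 e by simp
qed

context der
begin

lemma fcm_prod_zero: "(\<And>i. i \<in> A \<Longrightarrow> fcm (f i) = 0) \<Longrightarrow> fcm (prod f A) = 0"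
  by (induction A rule: infinite_finite_induct) (auto simp: fcm_mult)

end

context derR
begin

lemma fcm_recipfact: "fcm (recipfact n) = 0"
proof (cases "0 \<le> n")
  case True
  have "fcm (Qp (nat n)) = 0"
    unfolding Qp_def by (rule fcm_prod_zero) (simp add: fcm_add fcm_mult dT)
  then show ?thesis using fcm_inverse[OF rf_inv[OF True]] by simp
next
  case False
  then show ?thesis
    by (simp add: recipfact_neg) (rule fcm_prod_zero, simp add: fcm_diff fcm_mult dT)
qed

lemma d_al: "d (al n m) = 0"
proof -
  have "d (recipfact n $ j) = 0" for j
    using arg_cong[OF fcm_recipfact, of "\<lambda>f. f $ j"] by simp
  then show ?thesis by (simp add: al_eq)
qed

lemma piK_nth: "piK k $$ m = (\<Sum>n\<in>{k..m}. al n m * cc n k)"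
  unfolding piK_def al_def cc_def
  by (rule nth_Abs_fls_lower_bound[where N = k]) simp

end

lemma sumlemma:
  fixes alf c u :: "int \<Rightarrow> int \<Rightarrow> 'a::comm_ring_1" and tau e0 e1 :: 'a
  assumes A1: "\<And>n m. m < n \<Longrightarrow> alf n m = 0"
    and A2: "\<And>n m. of_int n * alf n m = alf (n - 1) (m - 1) - tau * alf n (m - 1)"
    and C1: "\<And>n k. n < k \<Longrightarrow> c n k = 0"
    and U1: "\<And>n k. n - 1 < k \<Longrightarrow> u n k = 0"
    and U2: "\<And>n k. u (n + 1) k - tau * u n k = e0 * c n k + e1 * c n (k + 1)"
  shows "(\<Sum>n\<in>{k..m}. alf n m * (of_int n * u n k))
       = e0 * (\<Sum>n\<in>{k..m-1}. alf n (m - 1) * c n k) + e1 * (\<Sum>n\<in>{k+1..m-1}. alf n (m - 1) * c n (k + 1))"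
proof -
  let ?I = "{k - 1..m - 1}"
  have t1: "alf n m * (of_int n * u n k) = alf (n - 1) (m - 1) * u n k - tau * (alf n (m - 1) * u n k)" for n
  proof -
    have "alf n m * (of_int n * u n k) = (of_int n * alf n m) * u n k" by (simp only: mult_ac)
    also have "\<dots> = (alf (n - 1) (m - 1) - tau * alf n (m - 1)) * u n k" by (simp only: A2)
    also have "\<dots> = alf (n - 1) (m - 1) * u n k - tau * (alf n (m - 1) * u n k)"
      by (simp only: left_diff_distrib mult.assoc)
    finally show ?thesis .
  qed
  have "(\<Sum>n\<in>{k..m}. alf n m * (of_int n * u n k))
      = (\<Sum>n\<in>{k..m}. alf (n - 1) (m - 1) * u n k) - tau * (\<Sum>n\<in>{k..m}. alf n (m - 1) * u n k)"
    by (simp only: t1 sum_subtractf sum_distrib_left)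
  also have "(\<Sum>n\<in>{k..m}. alf (n - 1) (m - 1) * u n k) = (\<Sum>n\<in>?I. alf n (m - 1) * u (n + 1) k)"
    by (rule sum.reindex_bij_witness[where i = "\<lambda>n. n + 1" and j = "\<lambda>n. n - 1"]) auto
  also have "(\<Sum>n\<in>{k..m}. alf n (m - 1) * u n k) = (\<Sum>n\<in>?I. alf n (m - 1) * u n k)"
  proof -
    have "(\<Sum>n\<in>{k..m}. alf n (m - 1) * u n k) = (\<Sum>n\<in>{k-1..m}. alf n (m - 1) * u n k)"
    proof (rule sum.mono_neutral_left)
      show "\<forall>i\<in>{k - 1..m} - {k..m}. alf i (m - 1) * u i k = 0"
      proof
        fix i assume "i \<in> {k - 1..m} - {k..m}"
        then have "i = k - 1" by auto
        then show "alf i (m - 1) * u i k = 0" using U1[of i k] by simp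
      qed
    qed auto
    moreover have "(\<Sum>n\<in>?I. alf n (m - 1) * u n k) = (\<Sum>n\<in>{k-1..m}. alf n (m - 1) * u n k)"
    proof (rule sum.mono_neutral_left)
      show "\<forall>i\<in>{k - 1..m} - ?I. alf i (m - 1) * u i k = 0"
      proof
        fix i assume "i \<in> {k - 1..m} - ?I"
        then have "i = m" by auto
        then show "alf i (m - 1) * u i k = 0" using A1[of "m - 1" i] by simp
      qed
    qed auto
    ultimately show ?thesis by simp
  qed
  also have "(\<Sum>n\<in>?I. alf n (m - 1) * u (n + 1) k) - tau * (\<Sum>n\<in>?I. alf n (m - 1) * u n k)
      = (\<Sum>n\<in>?I. alf n (m - 1) * (u (n + 1) k - tau * u n k))"
  proof -
    have tt: "alf n (m - 1) * (u (n + 1) k - tau * u n k) = alf n (m - 1) * u (n + 1) k - tau * (alf n (m - 1) * u n k)" for n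
      by (simp only: right_diff_distrib mult_ac)
    show ?thesis by (simp only: tt sum_subtractf sum_distrib_left)
  qed
  also have "\<dots> = e0 * (\<Sum>n\<in>?I. alf n (m - 1) * c n k) + e1 * (\<Sum>n\<in>?I. alf n (m - 1) * c n (k + 1))"
  proof -
    have "alf n (m - 1) * (u (n + 1) k - tau * u n k) = e0 * (alf n (m - 1) * c n k) + e1 * (alf n (m - 1) * c n (k + 1))" for n
      by (simp only: U2 distrib_left mult_ac)
    then show ?thesis by (simp only: sum.distrib sum_distrib_left)
  qed
  also have "(\<Sum>n\<in>?I. alf n (m - 1) * c n k) = (\<Sum>n\<in>{k..m-1}. alf n (m - 1) * c n k)"
  proof (rule sum.mono_neutral_right)
    show "\<forall>i\<in>?I - {k..m-1}. alf i (m - 1) * c i k = 0"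
    proof
      fix i assume "i \<in> ?I - {k..m-1}"
      then have "i < k" by auto
      then show "alf i (m - 1) * c i k = 0" using C1[of i k] by simp
    qed
  qed auto
  also have "(\<Sum>n\<in>?I. alf n (m - 1) * c n (k + 1)) = (\<Sum>n\<in>{k+1..m-1}. alf n (m - 1) * c n (k + 1))"
  proof (rule sum.mono_neutral_right)
    show "\<forall>i\<in>?I - {k+1..m-1}. alf i (m - 1) * c i (k + 1) = 0"
    proof
      fix i assume "i \<in> ?I - {k+1..m-1}"
      then have "i < k + 1" by auto
      then show "alf i (m - 1) * c i (k + 1) = 0" using C1[of i "k + 1"] by simp
    qed
  qed auto
  finally show ?thesis .
qed

context derR
begin

lemma main_loc: "fls_cm (piK k) = fls_const e0 * (fls_X * piK k) + fls_const e1 * (fls_X * piK (k + 1))"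
proof (rule fls_eqI)
  fix m
  have "fls_cm (piK k) $$ m = (\<Sum>n\<in>{k..m}. al n m * (of_int n * uu n k))"
    by (simp add: piK_nth d_sum d_mult d_al d_cc)
  also have "\<dots> = e0 * (\<Sum>n\<in>{k..m-1}. al n (m - 1) * cc n k) + e1 * (\<Sum>n\<in>{k+1..m-1}. al n (m - 1) * cc n (k + 1))"
    by (rule sumlemma[where tau = varT]) (simp_all add: al_zero al_rec cc_zero uu_zero uu_rec)
  also have "\<dots> = (fls_const e0 * (fls_X * piK k) + fls_const e1 * (fls_X * piK (k + 1))) $$ m"
    by (simp add: fls_X_times_conv_shift piK_nth)
  finally show "fls_cm (piK k) $$ m = (fls_const e0 * (fls_X * piK k) + fls_const e1 * (fls_X * piK (k + 1))) $$ m" .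
qed

lemma main_cmap: "fls_cmap d (piK k) = fls_const e0 * (fls_X * piK k) + fls_const e1 * (fls_X * piK (k + 1))"
proof -
  have "fls_cmap d (piK k) = fls_cm (piK k)" by (simp add: fls_cmap_def fls_cm_def)
  then show ?thesis by (simp add: main_loc)
qed

end

interpretation PD: der "pderiv :: 'a::idom poly \<Rightarrow> 'a poly"
  by unfold_locales (simp_all add: pderiv_add pderiv_mult algebra_simps)

lemma der_dV: "derR dV 1 0"
proof unfold_locales
  show "dV (x + y) = dV x + dV y" for x y by (simp add: dV_def pderiv_add)
  show "dV (x * y) = dV x * y + x * dV y" for x y by (simp add: dV_def pderiv_mult algebra_simps)
  show "dV varT = 0" by (simp add: dV_def varT_def pderiv_pCons)
  show "dV (cR c) = 0" for c by (simp add: dV_def cR_def pderiv_pCons)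
  show "dV varV = 1" by (simp add: dV_def varV_def pderiv_pCons)
  show "dV varQ = 0" by (simp add: dV_def varQ_def pderiv_pCons)
qed

lemma der_dQ: "derR dQ 0 1"
proof unfold_locales
  show "dQ (x + y) = dQ x + dQ y" for x y
    by (rule poly_eqI) (simp add: dQ_def coeff_map_poly pderiv_add)
  show "dQ (x * y) = dQ x * y + x * dQ y" for x y
    by (rule poly_eqI) (simp only: dQ_def coeff_map_poly[where f = pderiv, OF pderiv_0] coeff_add
        coeff_mult PD.d_sum PD.d_mult sum.distrib)
  show "dQ varT = 0" by (rule poly_eqI) (simp add: dQ_def varT_def coeff_map_poly coeff_pCons pderiv_pCons split: nat.split)
  show "dQ (cR c) = 0" for c by (rule poly_eqI) (simp add: dQ_def cR_def coeff_map_poly coeff_pCons pderiv_pCons split: nat.split)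
  show "dQ varV = 0" by (rule poly_eqI) (simp add: dQ_def varV_def coeff_map_poly coeff_pCons pderiv_pCons split: nat.split)
  show "dQ varQ = 1" by (rule poly_eqI) (simp add: dQ_def varQ_def coeff_map_poly coeff_pCons pderiv_pCons one_pCons split: nat.split)
qed

theorem mainTheorem8:
  fixes k :: int
  shows "fls_cmap dV (piK k) = fls_X * piK k \<and> fls_cmap dQ (piK k) = fls_X * piK (k + 1)"
proof
  show "fls_cmap dV (piK k) = fls_X * piK k"
    using derR.main_cmap[OF der_dV, of k] by simp
  show "fls_cmap dQ (piK k) = fls_X * piK (k + 1)"
    using derR.main_cmap[OF der_dQ, of k] by simp
qed


end
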